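(* (Gillett's conjecture.) Let $m=3$ and $n\ge1$, and let $k=\lfloor n/2\rfloor$. For every probability vector $p=(p_1,\dots,p_6)$ on the six rankings, $$P(3,n;p)\;\ge\;3\Bigl(1-B\bigl(k;n,\tfrac13\bigr)\Bigr)=3n\binom{n-1}{k}\int_0^{1/3}t^k(1-t)^{n-k-1}\,dt,$$ with equality when $p_1=p_4=p_5=\frac13$, $p_2=p_3=p_6=0$ (and also when $p_2=p_3=p_6=\frac13$, $p_1=p_4=p_5=0$). Hence these distributions minimize the probability of a Condorcet winner.
   Context: Three candidates $C_1,C_2,C_3$ and six rankings with probabilities $p_1$ ($C_1C_2C_3$), $p_2$ ($C_1C_3C_2$), $p_3$ ($C_2C_1C_3$), $p_4$ ($C_2C_3C_1$), $p_5$ ($C_3C_1C_2$), $p_6$ ($C_3C_2C_1$), listed best to worst. $n$ voters independently choose rankings with these probabilities. A candidate is a Condorcet winner if, for every other candidate, strictly more than $n/2$ voters rank it above that candidate. $P(3,n;p)$ is the probability that a Condorcet winner exists. $B(k;n,q)=\sum_{j=0}^{k}\binom nj q^j(1-q)^{n-j}$ is the binomial cumulative distribution function. *)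

theory Defs
  imports "HOL-Analysis.Analysis"
begin

text \<open>Candidates are 1, 2, 3 (for C1, C2, C3). Rankings are indexed 1..6 as in the
paper; ranking_list r lists the candidates from best to worst.\<close>

fun ranking_list :: "nat \<Rightarrow> nat list" where
  "ranking_list r =
     (if r = 1 then [1,2,3] else if r = 2 then [1,3,2] else if r = 3 then [2,1,3]
      else if r = 4 then [2,3,1] else if r = 5 then [3,1,2] else [3,2,1])"

definition rankings :: "nat set" where
  "rankings = {1..6}"

definition candidates :: "nat set" where
  "candidates = {1,2,3}"

definition prefers :: "nat \<Rightarrow> nat \<Rightarrow> nat \<Rightarrow> bool" where
  "prefers r a b \<longleftrightarrow> (\<exists>i j. i < j \<and> j < length (ranking_list r) \<and>
       ranking_list r ! i = a \<and> ranking_list r ! j = b)"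

definition condorcet_winner :: "nat \<Rightarrow> (nat \<Rightarrow> nat) \<Rightarrow> nat \<Rightarrow> bool" where
  "condorcet_winner n f c \<longleftrightarrow> c \<in> candidates \<and>
     (\<forall>d \<in> candidates. d \<noteq> c \<longrightarrow> real (card {i \<in> {..<n}. prefers (f i) c d}) > real n / 2)"

definition has_condorcet_winner :: "nat \<Rightarrow> (nat \<Rightarrow> nat) \<Rightarrow> bool" where
  "has_condorcet_winner n f \<longleftrightarrow> (\<exists>c. condorcet_winner n f c)"

text \<open>P(3,n;p): probability that a Condorcet winner exists when n voters
independently choose ranking r with probability p r.\<close>
definition P3 :: "nat \<Rightarrow> (nat \<Rightarrow> real) \<Rightarrow> real" where
  "P3 n p = (\<Sum>f \<in> {..<n} \<rightarrow>\<^sub>E rankings.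
              if has_condorcet_winner n f then (\<Prod>i<n. p (f i)) else 0)"

definition prob_vector :: "(nat \<Rightarrow> real) \<Rightarrow> bool" where
  "prob_vector p \<longleftrightarrow> (\<forall>r \<in> rankings. p r \<ge> 0) \<and> (\<Sum>r \<in> rankings. p r) = 1"

definition binom_cdf :: "nat \<Rightarrow> nat \<Rightarrow> real \<Rightarrow> real" where
  "binom_cdf k n q = (\<Sum>j = 0..k. real (n choose j) * q ^ j * (1 - q) ^ (n - j))"

end

theory Submission
  imports Defs
begin


lemma binom_cdf_deriv:
  fixes x :: real
  assumes "k < n"
  shows "((\<lambda>x. binom_cdf k n x) has_real_derivative
           -(real n * real ((n-1) choose k) * x^k * (1-x)^(n-1-k))) (at x)"
  using assms
proof (induction k)
  case 0
  have "((\<lambda>x. (1-x)^n) has_real_derivative (real n * (1-x)^(n-1) * (-1))) (at x)"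
    by (auto intro!: derivative_eq_intros)
  moreover have "binom_cdf 0 n = (\<lambda>x. (1-x)^n)"
    by (auto simp: binom_cdf_def fun_eq_iff)
  ultimately show ?case by simp
next
  case (Suc k)
  then have IH: "((\<lambda>x. binom_cdf k n x) has_real_derivative
           -(real n * real ((n-1) choose k) * x^k * (1-x)^(n-1-k))) (at x)" by simp
  obtain e where e: "n - Suc k = Suc e" using Suc.prems by (metis Suc_diff_Suc)
  obtain n' where n': "n = Suc n'" using Suc.prems by (cases n) auto
  have ee: "n - 1 - k = Suc e" "n - 1 - Suc k = e" using e n' by auto
  have fe: "binom_cdf (Suc k) n = (\<lambda>x. binom_cdf k n x + real (n choose Suc k) * x^(Suc k) * (1-x)^(Suc e))"
    by (auto simp: binom_cdf_def fun_eq_iff e)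
  have c1: "real (n choose Suc k) * real (Suc k) = real n * real ((n-1) choose k)"
    using Suc_times_binomial[of k n'] n' by (metis of_nat_mult mult.commute diff_Suc_1)
  have c2: "real (n choose Suc k) * real (Suc e) = real n * real ((n-1) choose Suc k)"
    using binomial_absorb_comp[of n "Suc k"] e by (metis of_nat_mult mult.commute)
  have "((\<lambda>x. binom_cdf k n x + real (n choose Suc k) * x^(Suc k) * (1-x)^(Suc e)) has_real_derivative
     -(real n * real ((n-1) choose k) * x^k * (1-x)^(n-1-k)) +
      real (n choose Suc k) * (real (Suc k) * x^k * (1-x)^(Suc e) + x^(Suc k) * (real (Suc e) * (1-x)^e * (-1)))) (at x)"
    apply (rule derivative_eq_intros IH refl | simp)+
    by (simp only: right_diff_distrib mult_ac)
  moreover have "-(real n * real ((n-1) choose k) * x^k * (1-x)^(n-1-k)) +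
      real (n choose Suc k) * (real (Suc k) * x^k * (1-x)^(Suc e) + x^(Suc k) * (real (Suc e) * (1-x)^e * (-1)))
    = -(real n * real ((n-1) choose Suc k) * x^Suc k * (1-x)^(n-1-Suc k))"
  proof -
    have "real (n choose Suc k) * (real (Suc k) * x^k * (1-x)^(Suc e)) = real n * real ((n-1) choose k) * x^k * (1-x)^(Suc e)"
    proof -
      have "real (n choose Suc k) * (real (Suc k) * x^k * (1-x)^(Suc e)) = (real (n choose Suc k) * real (Suc k)) * (x^k * (1-x)^(Suc e))"
        by (simp only: mult_ac)
      also have "\<dots> = (real n * real ((n-1) choose k)) * (x^k * (1-x)^(Suc e))" by (simp only: c1)
      finally show ?thesis by (simp only: mult_ac)
    qed
    moreover have "real (n choose Suc k) * (x^(Suc k) * (real (Suc e) * (1-x)^e * (-1))) = - (real n * real ((n-1) choose Suc k) * x^Suc k * (1-x)^e)"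
    proof -
      have "real (n choose Suc k) * (x^(Suc k) * (real (Suc e) * (1-x)^e * (-1))) = - ((real (n choose Suc k) * real (Suc e)) * (x^(Suc k) * (1-x)^e))"
        by (simp only: mult_ac mult_minus_right mult_1_right)
      also have "\<dots> = - ((real n * real ((n-1) choose Suc k)) * (x^(Suc k) * (1-x)^e))" by (simp only: c2)
      finally show ?thesis by (simp only: mult_ac)
    qed
    ultimately show ?thesis unfolding ee by (simp add: algebra_simps)
  qed
  ultimately show ?case unfolding fe by simp
qed



lemma jensen3:
  fixes G :: "real \<Rightarrow> real"
  assumes cv: "convex_on {0..1/2} G" and ab: "a \<in> {0..1/2}" "b \<in> {0..1/2}" "c \<in> {0..1/2}"
  shows "3 * G ((a+b+c)/3) \<le> G a + G b + G c"
proof -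
  have m: "(a+b)/2 \<in> {0..1/2}" using ab by auto
  have 1: "G ((1 - 1/2) *\<^sub>R a + (1/2) *\<^sub>R b) \<le> (1 - 1/2) * G a + (1/2) * G b"
    by (rule convex_onD[OF cv]) (use ab in auto)
  have 2: "G ((1 - 1/3) *\<^sub>R ((a+b)/2) + (1/3) *\<^sub>R c) \<le> (1 - 1/3) * G ((a+b)/2) + (1/3) * G c"
    by (rule convex_onD[OF cv]) (use ab m in auto)
  have e1: "(1 - 1/2) *\<^sub>R a + (1/2) *\<^sub>R b = (a+b)/2" by simp
  have e2: "(1 - 1/3) *\<^sub>R ((a+b)/2) + (1/3) *\<^sub>R c = (a+b+c)/3" by simp
  show ?thesis using 1 2 unfolding e1 e2 by (simp; linarith)
qed

lemma phi_mono:
  fixes x y :: real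
  assumes "m \<le> k" "0 \<le> x" "x \<le> y" "y \<le> 1/2"
  shows "x^k*(1-x)^m \<le> y^k*(1-y)^m"
proof -
  have xy: "x*(1-x) \<le> y*(1-y)"
  proof -
    have "y*(1-y) - x*(1-x) = (y-x)*(1-x-y)" by (simp add: algebra_simps)
    also have "\<dots> \<ge> 0" using assms by (intro mult_nonneg_nonneg) auto
    finally show ?thesis by simp
  qed
  have x0: "0 \<le> x*(1-x)" using assms by auto
  have "x^k*(1-x)^m = (x*(1-x))^m * x^(k-m)"
    using assms(1) by (simp add: power_mult_distrib power_add[symmetric] mult_ac)
  also have "\<dots> \<le> (y*(1-y))^m * y^(k-m)"
  proof (rule mult_mono)
    show "(x*(1-x))^m \<le> (y*(1-y))^m" using xy x0 by (rule power_mono)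
    show "x^(k-m) \<le> y^(k-m)" using assms by (intro power_mono) auto
    show "0 \<le> (y*(1-y))^m" using x0 xy by simp
    show "0 \<le> x^(k-m)" using assms by simp
  qed
  also have "\<dots> = y^k*(1-y)^m"
    using assms(1) by (simp add: power_mult_distrib power_add[symmetric] mult_ac)
  finally show ?thesis .
qed

lemma phi_cmp:
  fixes x :: real
  assumes "m \<le> k" "1/2 \<le> x" "x \<le> 1"
  shows "((1-x)/2)^k*(1-(1-x)/2)^m \<le> x^k*(1-x)^m"
proof -
  define d where "d = (1-x)/2"
  have d: "0 \<le> d" "d \<le> x" "1 - x = 2*d" using assms by (auto simp: d_def)
  have "d^k*(1-d)^m = (d*(1-d))^m * d^(k-m)"
    using assms(1) by (simp add: power_mult_distrib power_add[symmetric] mult_ac)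
  also have "\<dots> \<le> (x*(2*d))^m * x^(k-m)"
  proof (rule mult_mono)
    have "d*(1-d) \<le> d*(2*x)" using assms d by (intro mult_left_mono) auto
    then have "d*(1-d) \<le> x*(2*d)" by (simp add: mult_ac)
    then show "(d*(1-d))^m \<le> (x*(2*d))^m" using d assms by (intro power_mono) auto
    show "d^(k-m) \<le> x^(k-m)" using d by (intro power_mono) auto
    show "0 \<le> (x*(2*d))^m" using d assms by simp
    show "0 \<le> d^(k-m)" using d by simp
  qed
  also have "\<dots> = x^k*(1-x)^m"
    using assms(1) d(3) by (simp add: power_mult_distrib power_add[symmetric] mult_ac)
  finally show ?thesis unfolding d_def .
qed

lemma G_deriv:
  fixes x :: real
  assumes "k < n"
  shows "((\<lambda>x. 1 - binom_cdf k n x) has_real_derivative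
           (real n * real ((n-1) choose k) * (x^k * (1-x)^(n-1-k)))) (at x)"
  using binom_cdf_deriv[OF assms, of x]
  by (auto intro!: derivative_eq_intros simp: mult_ac)

lemma G_convex:
  assumes "n \<ge> 1"
  shows "convex_on {0..1/2} (\<lambda>x. 1 - binom_cdf (n div 2) n x)"
proof (rule convex_on_realI)
  show "connected {0..1/2::real}" by simp
  show "((\<lambda>x. 1 - binom_cdf (n div 2) n x) has_real_derivative
           (real n * real ((n-1) choose (n div 2)) * (x^(n div 2) * (1-x)^(n-1-(n div 2))))) (at x)" for x :: real
    using assms by (intro G_deriv) auto
  show "real n * real ((n-1) choose (n div 2)) * (x^(n div 2) * (1-x)^(n-1-(n div 2)))
      \<le> real n * real ((n-1) choose (n div 2)) * (y^(n div 2) * (1-y)^(n-1-(n div 2)))"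
    if "x \<in> {0..1/2}" "y \<in> {0..1/2}" "x \<le> y" for x y :: real
    using that by (intro mult_left_mono phi_mono) auto
qed

lemma G_main:
  fixes a b c :: real
  assumes "n \<ge> 1" "a \<ge> 0" "b \<ge> 0" "c \<ge> 0" "a + b + c = 1"
  shows "3 * (1 - binom_cdf (n div 2) n (1/3)) \<le>
    (1 - binom_cdf (n div 2) n a) + (1 - binom_cdf (n div 2) n b) + (1 - binom_cdf (n div 2) n c)"
proof -
  define G where "G = (\<lambda>x. 1 - binom_cdf (n div 2) n x)"
  define K where "K = real n * real ((n-1) choose (n div 2))"
  define k where "k = n div 2"
  have kn: "k < n" "n - 1 - k \<le> k" using assms(1) by (auto simp: k_def)
  have cv: "convex_on {0..1/2} G" unfolding G_def using G_convex[OF assms(1)] .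
  have K0: "K \<ge> 0" by (simp add: K_def)
  have der: "(G has_real_derivative K * (x^k * (1-x)^(n-1-k))) (at x)" for x
    unfolding G_def K_def k_def using G_deriv kn(1) k_def by blast
  have J: "3 * G (1/3) \<le> G a + G b + G c" if "a \<in> {0..1/2}" "b \<in> {0..1/2}" "c \<in> {0..1/2}" "a+b+c = 1" for a b c
    using jensen3[OF cv that(1-3)] that(4) by simp
  have L: "3 * G (1/3) \<le> G a + G b + G c"
    if h: "a \<ge> 0" "b \<ge> 0" "c > 1/2" "a+b+c = 1" for a b c
  proof -
    define F where "F = (\<lambda>x. G x + 2 * G ((1-x)/2))"
    have derF: "(F has_real_derivative (K * (x^k * (1-x)^(n-1-k)) - K * (((1-x)/2)^k * (1-(1-x)/2)^(n-1-k)))) (at x)" for x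
      unfolding F_def
      by (rule derivative_eq_intros der[THEN DERIV_chain2] refl | simp)+
    have contF: "continuous_on {1/2..c} F"
      using derF by (intro continuous_at_imp_continuous_on ballI DERIV_isCont) blast
    have "F (1/2) \<le> F c"
    proof (rule DERIV_nonneg_imp_increasing_open[OF _ _ contF])
      show "1/2 \<le> c" using h by simp
      fix x assume x: "1/2 < x" "x < c"
      have "K * (((1-x)/2)^k * (1-(1-x)/2)^(n-1-k)) \<le> K * (x^k * (1-x)^(n-1-k))"
        using x h kn K0 by (intro mult_left_mono phi_cmp) auto
      then show "\<exists>y. (F has_real_derivative y) (at x) \<and> 0 \<le> y" using derF by force
    qed
    moreover have "3 * G (1/3) \<le> F (1/2)"
      using J[of "1/4" "1/4" "1/2"] by (simp add: F_def)
    moreover have "2 * G ((1-c)/2) \<le> G a + G b"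
    proof -
      have "G ((1 - 1/2) *\<^sub>R a + (1/2) *\<^sub>R b) \<le> (1 - 1/2) * G a + (1/2) * G b"
        by (rule convex_onD[OF cv]) (use h in auto)
      moreover have e: "(1 - 1/2) *\<^sub>R a + (1/2) *\<^sub>R b = (1-c)/2" using h by simp
      ultimately have "G ((1-c)/2) \<le> (1 - 1/2) * G a + (1/2) * G b" by (simp only: e)
      then show ?thesis by simp
    qed
    ultimately show ?thesis unfolding F_def by linarith
  qed
  have "3 * G (1/3) \<le> G a + G b + G c"
  proof -
    consider "a > 1/2" | "b > 1/2" | "c > 1/2" | "a \<le> 1/2" "b \<le> 1/2" "c \<le> 1/2" by linarith
    then show ?thesis
    proof cases
      case 1 then show ?thesis using L[of b c a] assms by simp
    next
      case 2 then show ?thesis using L[of a c b] assms by simp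
    next
      case 3 then show ?thesis using L[of a b c] assms by simp
    next
      case 4 then show ?thesis using J[of a b c] assms by simp
    qed
  qed
  then show ?thesis by (simp add: G_def)
qed



lemma count_sum:
  fixes p :: "nat \<Rightarrow> real"
  assumes R: "finite R" "S \<subseteq> R"
  shows "(\<Sum>f\<in>{..<n} \<rightarrow>\<^sub>E R. if card {i\<in>{..<n}. f i \<in> S} = j then \<Prod>i<n. p (f i) else 0)
       = real (n choose j) * (\<Sum>r\<in>S. p r)^j * (\<Sum>r\<in>R-S. p r)^(n-j)"
proof (induction n arbitrary: j)
  case 0
  have e: "{..<0::nat} = {}" by simp
  have e2: "{} \<rightarrow>\<^sub>E R = {\<lambda>x. undefined}" by (rule PiE_empty_domain)
  show ?case unfolding e e2 by (cases j) auto
next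
  case (Suc n)
  define W where "W = (\<lambda>j. (\<Sum>f\<in>{..<n} \<rightarrow>\<^sub>E R. if card {i\<in>{..<n}. f i \<in> S} = j then \<Prod>i<n. p (f i) else 0))"
  define qS where "qS = (\<Sum>r\<in>S. p r)"
  define qT where "qT = (\<Sum>r\<in>R-S. p r)"
  define h where "h = (\<lambda>f. if card {i\<in>{..<Suc n}. f i \<in> S} = j then \<Prod>i<Suc n. p (f i) else 0)"
  have IH: "W j' = real (n choose j') * qS^j' * qT^(n-j')" for j'
    unfolding W_def qS_def qT_def by (rule Suc.IH)
  have PI: "{..<Suc n} \<rightarrow>\<^sub>E R = (\<lambda>(y, g). g(n := y)) ` (R \<times> ({..<n} \<rightarrow>\<^sub>E R))"
    by (simp add: lessThan_Suc PiE_insert_eq)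
  have inj: "inj_on (\<lambda>(y, g). g(n := y)) (R \<times> ({..<n} \<rightarrow>\<^sub>E R))"
    using inj_combinator[of n "{..<n}" "\<lambda>_. R"] by simp
  have "(\<Sum>f\<in>{..<Suc n} \<rightarrow>\<^sub>E R. h f) = (\<Sum>(y,g)\<in>R \<times> ({..<n} \<rightarrow>\<^sub>E R). h (g(n := y)))"
    unfolding PI by (subst sum.reindex[OF inj]) (simp add: case_prod_beta')
  also have "\<dots> = (\<Sum>y\<in>R. \<Sum>g\<in>{..<n} \<rightarrow>\<^sub>E R. h (g(n := y)))"
    by (rule sum.cartesian_product[symmetric])
  also have "\<dots> = (\<Sum>y\<in>R. p y * (if y \<in> S then (case j of 0 \<Rightarrow> 0 | Suc j' \<Rightarrow> W j') else W j))"
  proof (rule sum.cong[OF refl])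
    fix y assume y: "y \<in> R"
    have hc: "h (g(n := y)) = p y * (if card {i\<in>{..<n}. g i \<in> S} + (if y \<in> S then 1 else 0) = j then \<Prod>i<n. p (g i) else 0)" for g
    proof -
      have "{i\<in>{..<Suc n}. (g(n := y)) i \<in> S} = {i\<in>{..<n}. g i \<in> S} \<union> (if y \<in> S then {n} else {})"
        by (auto simp: less_Suc_eq)
      then have "card {i\<in>{..<Suc n}. (g(n := y)) i \<in> S} = card {i\<in>{..<n}. g i \<in> S} + (if y \<in> S then 1 else 0)"
        by (simp add: card_Un_disjoint)
      moreover have "(\<Prod>i<Suc n. p ((g(n := y)) i)) = p y * (\<Prod>i<n. p (g i))"
        by (simp add: prod.lessThan_Suc mult.commute)
      ultimately show ?thesis unfolding h_def by simp
    qed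
    show "(\<Sum>g\<in>{..<n} \<rightarrow>\<^sub>E R. h (g(n := y))) = p y * (if y \<in> S then (case j of 0 \<Rightarrow> 0 | Suc j' \<Rightarrow> W j') else W j)"
      unfolding hc sum_distrib_left[symmetric] W_def
      by (cases j) auto
  qed
  also have "\<dots> = qS * (case j of 0 \<Rightarrow> 0 | Suc j' \<Rightarrow> W j') + qT * W j"
  proof -
    have "(\<Sum>y\<in>R. p y * (if y \<in> S then (case j of 0 \<Rightarrow> 0 | Suc j' \<Rightarrow> W j') else W j))
       = (\<Sum>y\<in>R-S. p y * (if y \<in> S then (case j of 0 \<Rightarrow> 0 | Suc j' \<Rightarrow> W j') else W j))
         + (\<Sum>y\<in>S. p y * (if y \<in> S then (case j of 0 \<Rightarrow> 0 | Suc j' \<Rightarrow> W j') else W j))"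
      using R by (intro sum.subset_diff) auto
    then show ?thesis unfolding qS_def qT_def sum_distrib_right by simp
  qed
  also have "\<dots> = real (Suc n choose j) * qS^j * qT^(Suc n-j)"
  proof (cases j)
    case 0 then show ?thesis by (simp add: IH)
  next
    case (Suc j')
    show ?thesis
    proof (cases "j' < n")
      case True
      then have e: "n - j' = Suc (n - Suc j')" by simp
      show ?thesis unfolding Suc IH using e by (simp add: algebra_simps)
    next
      case False
      then have "n choose Suc j' = 0" by simp
      then show ?thesis unfolding Suc IH by (simp add: algebra_simps)
    qed
  qed
  finally show ?case unfolding h_def qS_def qT_def .
qed

lemma tail_sum:
  fixes p :: "nat \<Rightarrow> real"
  assumes R: "finite R" "S \<subseteq> R" "(\<Sum>r\<in>R. p r) = 1"
  shows "(\<Sum>f\<in>{..<n} \<rightarrow>\<^sub>E R. if real (card {i\<in>{..<n}. f i \<in> S}) > real n / 2 then \<Prod>i<n. p (f i) else 0)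
       = 1 - binom_cdf (n div 2) n (\<Sum>r\<in>S. p r)"
proof -
  define P where "P = (\<lambda>f. \<Prod>i<n. p (f i))"
  define cnt where "cnt = (\<lambda>f. card {i\<in>{..<n}. f i \<in> S})"
  have fin: "finite ({..<n} \<rightarrow>\<^sub>E R)" using R by (simp add: finite_PiE)
  have qT: "(\<Sum>r\<in>R-S. p r) = 1 - (\<Sum>r\<in>S. p r)" using R by (simp add: sum_diff)
  have iff: "real c > real n / 2 \<longleftrightarrow> \<not> c \<le> n div 2" for c :: nat
  proof -
    have "n = 2 * (n div 2) + n mod 2" by simp
    moreover have "n mod 2 < 2" by simp
    ultimately show ?thesis by linarith
  qed
  have pt: "(if real (cnt f) > real n / 2 then P f else 0) = P f - (\<Sum>j\<in>{0..n div 2}. if cnt f = j then P f else 0)" for f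
  proof -
    have "(\<Sum>j\<in>{0..n div 2}. if cnt f = j then P f else 0) = (if cnt f \<in> {0..n div 2} then P f else 0)"
      by (simp add: sum.delta)
    then show ?thesis unfolding iff by auto
  qed
  have tot: "(\<Sum>f\<in>{..<n} \<rightarrow>\<^sub>E R. P f) = 1"
    using prod_sum_PiE[of "{..<n}" "\<lambda>_. R" "\<lambda>_ r. p r"] R unfolding P_def by simp
  have "(\<Sum>f\<in>{..<n} \<rightarrow>\<^sub>E R. if real (cnt f) > real n / 2 then P f else 0)
      = (\<Sum>f\<in>{..<n} \<rightarrow>\<^sub>E R. P f) - (\<Sum>f\<in>{..<n} \<rightarrow>\<^sub>E R. \<Sum>j\<in>{0..n div 2}. if cnt f = j then P f else 0)"
    unfolding pt by (simp add: sum_subtractf)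
  also have "(\<Sum>f\<in>{..<n} \<rightarrow>\<^sub>E R. \<Sum>j\<in>{0..n div 2}. if cnt f = j then P f else 0)
      = (\<Sum>j\<in>{0..n div 2}. \<Sum>f\<in>{..<n} \<rightarrow>\<^sub>E R. if cnt f = j then P f else 0)"
    by (rule sum.swap)
  also have "\<dots> = binom_cdf (n div 2) n (\<Sum>r\<in>S. p r)"
    unfolding binom_cdf_def cnt_def P_def count_sum[OF R(1,2)] qT ..
  finally show ?thesis using tot unfolding cnt_def P_def by simp
qed

definition tops :: "nat \<Rightarrow> nat set" where
  "tops c = (if c = 1 then {1,2} else if c = 2 then {3,4} else {5,6})"

lemma ex_lt3: "(\<exists>i j. i < j \<and> j < (3::nat) \<and> P i j) \<longleftrightarrow> P 0 1 \<or> P 0 2 \<or> P 1 2"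
proof
  assume "\<exists>i j. i < j \<and> j < (3::nat) \<and> P i j"
  then obtain i j where "i < j" "j < (3::nat)" "P i j" by blast
  then have "(i = 0 \<and> j = 1) \<or> (i = 0 \<and> j = 2) \<or> (i = 1 \<and> j = 2)" by linarith
  then show "P 0 1 \<or> P 0 2 \<or> P 1 2" using \<open>P i j\<close> by auto
next
  assume "P 0 1 \<or> P 0 2 \<or> P 1 2"
  then show "\<exists>i j. i < j \<and> j < (3::nat) \<and> P i j"
  proof (elim disjE)
    assume "P 0 1" then show ?thesis by (intro exI[of _ 0] exI[of _ 1]) auto
  next
    assume "P 0 2" then show ?thesis by (intro exI[of _ 0] exI[of _ 2]) auto
  next
    assume "P 1 2" then show ?thesis by (intro exI[of _ 1] exI[of _ 2]) auto
  qed
qed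

lemma prefers_iff: "prefers r a b \<longleftrightarrow>
   (ranking_list r ! 0 = a \<and> ranking_list r ! 1 = b) \<or> (ranking_list r ! 0 = a \<and> ranking_list r ! 2 = b) \<or>
   (ranking_list r ! 1 = a \<and> ranking_list r ! 2 = b)"
proof -
  have "length (ranking_list r) = 3" by simp
  then show ?thesis unfolding prefers_def by (simp only: ex_lt3)
qed

lemma rankings_eq: "rankings = {1,2,3,4,5,6}" by (auto simp: rankings_def)

lemma top_wins:
  assumes "r \<in> rankings" "r \<in> tops c" "c \<in> candidates" "d \<in> candidates" "d \<noteq> c"
  shows "prefers r c d"
  using assms unfolding rankings_eq candidates_def tops_def prefers_iff
  by (auto split: if_splits)

definition Ev :: "nat \<Rightarrow> (nat \<Rightarrow> nat) \<Rightarrow> bool" where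
  "Ev n f \<longleftrightarrow> (\<exists>c\<in>{1,2,3::nat}. real (card {i\<in>{..<n}. f i \<in> tops c}) > real n / 2)"

lemma maj_imp_cw:
  assumes f: "f \<in> {..<n} \<rightarrow>\<^sub>E rankings" and E: "Ev n f"
  shows "has_condorcet_winner n f"
proof -
  obtain c where c: "c \<in> {1,2,3}" "real (card {i\<in>{..<n}. f i \<in> tops c}) > real n / 2"
    using E unfolding Ev_def by blast
  have "condorcet_winner n f c"
    unfolding condorcet_winner_def
  proof (intro conjI ballI impI)
    show cc: "c \<in> candidates" using c by (simp add: candidates_def)
    fix d assume d: "d \<in> candidates" "d \<noteq> c"
    have "{i\<in>{..<n}. f i \<in> tops c} \<subseteq> {i\<in>{..<n}. prefers (f i) c d}"
      using f cc d by (auto intro!: top_wins dest: PiE_mem)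
    then have "card {i\<in>{..<n}. f i \<in> tops c} \<le> card {i\<in>{..<n}. prefers (f i) c d}"
      by (intro card_mono) auto
    then show "real (card {i\<in>{..<n}. prefers (f i) c d}) > real n / 2" using c(2) by linarith
  qed
  then show ?thesis unfolding has_condorcet_winner_def by blast
qed

lemma tops_disj: "c \<noteq> c' \<Longrightarrow> c \<in> {1,2,3} \<Longrightarrow> c' \<in> {1,2,3} \<Longrightarrow> tops c \<inter> tops c' = {}"
  by (auto simp: tops_def)

lemma not_both:
  assumes "c \<noteq> c'" "c \<in> {1,2,3}" "c' \<in> {1,2,3}"
  shows "\<not> (real (card {i\<in>{..<n}. f i \<in> tops c}) > real n / 2 \<and> real (card {i\<in>{..<n}. f i \<in> tops c'}) > real n / 2)"
proof -
  have "{i\<in>{..<n}. f i \<in> tops c} \<inter> {i\<in>{..<n}. f i \<in> tops c'} = {}"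
    using tops_disj[OF assms] by auto
  then have "card {i\<in>{..<n}. f i \<in> tops c} + card {i\<in>{..<n}. f i \<in> tops c'}
      = card ({i\<in>{..<n}. f i \<in> tops c} \<union> {i\<in>{..<n}. f i \<in> tops c'})"
    by (intro card_Un_disjoint[symmetric]) auto
  also have "\<dots> \<le> card {..<n}" by (intro card_mono) auto
  finally show ?thesis by simp
qed

lemma Ev_split:
  "(if Ev n f then x else 0) = (\<Sum>c\<in>{1,2,3::nat}. if real (card {i\<in>{..<n}. f i \<in> tops c}) > real n / 2 then x else 0)"
  using not_both[of 1 2 n f] not_both[of 1 3 n f] not_both[of 2 3 n f]
  unfolding Ev_def by auto

lemma Esum:
  assumes "prob_vector p"
  shows "(\<Sum>f\<in>{..<n} \<rightarrow>\<^sub>E rankings. if Ev n f then \<Prod>i<n. p (f i) else 0)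
     = (\<Sum>c\<in>{1,2,3::nat}. 1 - binom_cdf (n div 2) n (\<Sum>r\<in>tops c. p r))"
proof -
  have R: "finite rankings" "(\<Sum>r\<in>rankings. p r) = 1" using assms by (auto simp: prob_vector_def rankings_def)
  have S: "tops c \<subseteq> rankings" for c by (auto simp: tops_def rankings_def)
  show ?thesis
    unfolding Ev_split
    by (subst sum.swap) (simp only: tail_sum[OF R(1) S R(2)])
qed

lemma lower:
  assumes "prob_vector p"
  shows "(\<Sum>f\<in>{..<n} \<rightarrow>\<^sub>E rankings. if Ev n f then \<Prod>i<n. p (f i) else 0) \<le> P3 n p"
  unfolding P3_def
proof (rule sum_mono)
  fix f assume f: "f \<in> {..<n} \<rightarrow>\<^sub>E rankings"
  have "0 \<le> (\<Prod>i<n. p (f i))"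
    using assms f by (intro prod_nonneg) (auto simp: prob_vector_def dest: PiE_mem)
  then show "(if Ev n f then \<Prod>i<n. p (f i) else 0) \<le> (if has_condorcet_winner n f then \<Prod>i<n. p (f i) else 0)"
    using maj_imp_cw[OF f] by auto
qed

lemma exact:
  assumes Q: "\<And>r. p r \<noteq> 0 \<Longrightarrow> r \<in> Q"
    and T: "\<And>c r. c \<in> {1,2,3} \<Longrightarrow> r \<in> Q \<Longrightarrow> prefers r c (dd c) \<Longrightarrow> r \<in> tops c"
    and D: "\<And>c. c \<in> {1,2,3} \<Longrightarrow> dd c \<in> candidates \<and> dd c \<noteq> c"
  shows "P3 n p = (\<Sum>f\<in>{..<n} \<rightarrow>\<^sub>E rankings. if Ev n f then \<Prod>i<n. p (f i) else 0)"
  unfolding P3_def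
proof (rule sum.cong[OF refl])
  fix f assume f: "f \<in> {..<n} \<rightarrow>\<^sub>E rankings"
  show "(if has_condorcet_winner n f then \<Prod>i<n. p (f i) else 0) = (if Ev n f then \<Prod>i<n. p (f i) else 0)"
  proof (cases "(\<Prod>i<n. p (f i)) = 0")
    case True then show ?thesis by simp
  next
    case False
    then have fq: "f i \<in> Q" if "i < n" for i using Q that by auto
    have "has_condorcet_winner n f \<longleftrightarrow> Ev n f"
    proof
      assume "has_condorcet_winner n f"
      then obtain c where c: "condorcet_winner n f c" unfolding has_condorcet_winner_def by blast
      then have c3: "c \<in> {1,2,3}" by (simp add: condorcet_winner_def candidates_def)
      have "real (card {i\<in>{..<n}. prefers (f i) c (dd c)}) > real n / 2"
        using c D[OF c3] unfolding condorcet_winner_def by blast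
      moreover have "{i\<in>{..<n}. prefers (f i) c (dd c)} \<subseteq> {i\<in>{..<n}. f i \<in> tops c}"
        using T[OF c3] fq by auto
      then have "card {i\<in>{..<n}. prefers (f i) c (dd c)} \<le> card {i\<in>{..<n}. f i \<in> tops c}"
        by (intro card_mono) auto
      ultimately show "Ev n f" unfolding Ev_def using c3 by fastforce
    next
      assume "Ev n f" then show "has_condorcet_winner n f" by (rule maj_imp_cw[OF f])
    qed
    then show ?thesis by simp
  qed
qed

lemma binom_cdf_0: "binom_cdf k n 0 = 1"
proof -
  have "binom_cdf k n 0 = (\<Sum>j=0..k. if j = 0 then 1 else 0)"
    unfolding binom_cdf_def by (rule sum.cong) (auto simp: power_0_left)
  then show ?thesis by simp
qed

lemma integral_id:
  assumes "n \<ge> 1"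
  shows "3 * (1 - binom_cdf (n div 2) n (1/3)) =
           3 * real n * real ((n - 1) choose (n div 2)) *
             integral {0..1/3} (\<lambda>t::real. t ^ (n div 2) * (1 - t) ^ (n - n div 2 - 1))"
proof -
  define k where "k = n div 2"
  define K where "K = real n * real ((n - 1) choose k)"
  have kn: "k < n" using assms by (simp add: k_def)
  have K0: "K > 0" using kn assms by (simp add: K_def)
  have ex: "n - k - 1 = n - 1 - k" by simp
  have der: "((\<lambda>x. (1 - binom_cdf k n x) / K) has_real_derivative (x^k * (1-x)^(n-k-1))) (at x)" for x :: real
  proof -
    have "((\<lambda>x. (1 - binom_cdf k n x) / K) has_real_derivative (K * (x^k * (1-x)^(n-1-k))) / K) (at x)"
      using DERIV_cdivide[OF G_deriv[OF kn, of x], of K] unfolding K_def by simp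
    then show ?thesis using K0 by (simp add: ex)
  qed
  have vd: "((\<lambda>x. (1 - binom_cdf k n x) / K) has_vector_derivative (x^k * (1-x)^(n-k-1))) (at x within {0..1/3})" for x :: real
    using has_field_derivative_at_within[OF der[of x]] by (simp only: has_real_derivative_iff_has_vector_derivative)
  have "((\<lambda>t::real. t ^ k * (1 - t) ^ (n - k - 1)) has_integral
        ((1 - binom_cdf k n (1/3)) / K - (1 - binom_cdf k n 0) / K)) {0..1/3}"
    by (rule fundamental_theorem_of_calculus[OF _ vd]) simp
  then have I: "integral {0..1/3} (\<lambda>t::real. t ^ k * (1 - t) ^ (n - k - 1)) = (1 - binom_cdf k n (1/3)) / K"
    unfolding binom_cdf_0 by (simp add: integral_unique)
  have "3 * real n * real ((n - 1) choose k) * integral {0..1/3} (\<lambda>t::real. t ^ k * (1 - t) ^ (n - k - 1))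
     = 3 * K * ((1 - binom_cdf k n (1/3)) / K)" unfolding I K_def by simp
  also have "\<dots> = 3 * (1 - binom_cdf k n (1/3))" using K0 by simp
  finally show ?thesis unfolding k_def by simp
qed


theorem mainTheorem9:
  fixes n :: nat
  assumes "n \<ge> 1"
  shows "(\<forall>p. prob_vector p \<longrightarrow> P3 n p \<ge> 3 * (1 - binom_cdf (n div 2) n (1/3)))
    \<and> 3 * (1 - binom_cdf (n div 2) n (1/3)) =
           3 * real n * real ((n - 1) choose (n div 2)) *
             integral {0..1/3} (\<lambda>t::real. t ^ (n div 2) * (1 - t) ^ (n - n div 2 - 1))
    \<and> P3 n (\<lambda>r. if r \<in> {1,4,5} then 1/3 else 0) = 3 * (1 - binom_cdf (n div 2) n (1/3))
    \<and> P3 n (\<lambda>r. if r \<in> {2,3,6} then 1/3 else 0) = 3 * (1 - binom_cdf (n div 2) n (1/3))"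
proof (intro conjI allI impI)
  fix p :: "nat \<Rightarrow> real" assume pv: "prob_vector p"
  have nn: "\<And>r. r \<in> rankings \<Longrightarrow> p r \<ge> 0" and s1: "(\<Sum>r\<in>rankings. p r) = 1"
    using pv by (auto simp: prob_vector_def)
  have "p 1 \<ge> 0" "p 2 \<ge> 0" "p 3 \<ge> 0" "p 4 \<ge> 0" "p 5 \<ge> 0" "p 6 \<ge> 0"
    using nn by (auto simp: rankings_eq)
  moreover have "p 1 + p 2 + p 3 + p 4 + p 5 + p 6 = 1" using s1 by (simp add: rankings_eq)
  ultimately have "3 * (1 - binom_cdf (n div 2) n (1/3)) \<le>
    (1 - binom_cdf (n div 2) n (p 1 + p 2)) + (1 - binom_cdf (n div 2) n (p 3 + p 4)) + (1 - binom_cdf (n div 2) n (p 5 + p 6))"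
    by (intro G_main assms) auto
  also have "\<dots> = (\<Sum>c\<in>{1,2,3::nat}. 1 - binom_cdf (n div 2) n (\<Sum>r\<in>tops c. p r))"
    by (simp add: tops_def)
  also have "\<dots> \<le> P3 n p" using lower[OF pv] unfolding Esum[OF pv] .
  finally show "P3 n p \<ge> 3 * (1 - binom_cdf (n div 2) n (1/3))" .
next
  show "3 * (1 - binom_cdf (n div 2) n (1/3)) =
           3 * real n * real ((n - 1) choose (n div 2)) *
             integral {0..1/3} (\<lambda>t::real. t ^ (n div 2) * (1 - t) ^ (n - n div 2 - 1))"
    by (rule integral_id[OF assms])
next
  define p0 where "p0 = (\<lambda>r::nat. if r \<in> {1,4,5} then 1/3 else (0::real))"
  have pv: "prob_vector p0" by (simp add: prob_vector_def p0_def rankings_eq)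
  have "P3 n p0 = (\<Sum>f\<in>{..<n} \<rightarrow>\<^sub>E rankings. if Ev n f then \<Prod>i<n. p0 (f i) else 0)"
  proof (rule exact[where Q="{1,4,5}" and dd="\<lambda>c. if c = 1 then 3 else if c = 2 then 1 else 2"])
    show "\<And>r. p0 r \<noteq> 0 \<Longrightarrow> r \<in> {1,4,5}" by (auto simp: p0_def split: if_splits)
    show "\<And>(c::nat) r. c \<in> {1,2,3} \<Longrightarrow> r \<in> {1,4,5} \<Longrightarrow> prefers r c (if c = 1 then 3 else if c = 2 then 1 else 2) \<Longrightarrow> r \<in> tops c"
      by (auto simp: prefers_iff tops_def)
    show "\<And>c::nat. c \<in> {1,2,3} \<Longrightarrow> (if c = 1 then 3 else if c = 2 then 1 else 2) \<in> candidates \<and> (if c = 1 then 3 else if c = 2 then 1 else 2) \<noteq> c"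
      by (auto simp: candidates_def)
  qed
  also have "\<dots> = 3 * (1 - binom_cdf (n div 2) n (1/3))"
    unfolding Esum[OF pv] by (simp add: tops_def p0_def)
  finally show "P3 n (\<lambda>r. if r \<in> {1,4,5} then 1/3 else 0) = 3 * (1 - binom_cdf (n div 2) n (1/3))"
    unfolding p0_def .
next
  define p0 where "p0 = (\<lambda>r::nat. if r \<in> {2,3,6} then 1/3 else (0::real))"
  have pv: "prob_vector p0" by (simp add: prob_vector_def p0_def rankings_eq)
  have "P3 n p0 = (\<Sum>f\<in>{..<n} \<rightarrow>\<^sub>E rankings. if Ev n f then \<Prod>i<n. p0 (f i) else 0)"
  proof (rule exact[where Q="{2,3,6}" and dd="\<lambda>c. if c = 1 then 2 else if c = 2 then 3 else 1"])
    show "\<And>r. p0 r \<noteq> 0 \<Longrightarrow> r \<in> {2,3,6}" by (auto simp: p0_def split: if_splits)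
    show "\<And>(c::nat) r. c \<in> {1,2,3} \<Longrightarrow> r \<in> {2,3,6} \<Longrightarrow> prefers r c (if c = 1 then 2 else if c = 2 then 3 else 1) \<Longrightarrow> r \<in> tops c"
      by (auto simp: prefers_iff tops_def)
    show "\<And>c::nat. c \<in> {1,2,3} \<Longrightarrow> (if c = 1 then 2 else if c = 2 then 3 else 1) \<in> candidates \<and> (if c = 1 then 2 else if c = 2 then 3 else 1) \<noteq> c"
      by (auto simp: candidates_def)
  qed
  also have "\<dots> = 3 * (1 - binom_cdf (n div 2) n (1/3))"
    unfolding Esum[OF pv] by (simp add: tops_def p0_def)
  finally show "P3 n (\<lambda>r. if r \<in> {2,3,6} then 1/3 else 0) = 3 * (1 - binom_cdf (n div 2) n (1/3))"
    unfolding p0_def .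
qed

end
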